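(* Let $a$ and $i$ be positive integers. Then $$\binom{3a+i}{a+i}_q=\sum_{k\geq0}q^{(a-k)(i-k)}\left[\binom{i+k}{2k}_q+q^{a+i}\binom{i+k-1}{2k-1}_q\right]\binom{3a+i}{a-k}_q.$$
   Context: For nonnegative integers $n$, $[n]!_q=\prod_{j=1}^n\frac{1-q^j}{1-q}$ (with $[0]!_q=1$), and for integers $0\le k\le n$, $\binom{n}{k}_q=\frac{[n]!_q}{[k]!_q[n-k]!_q}$ (Gaussian polynomial); set $\binom{n}{k}_q=0$ if $k<0$ or $k>n$. *)

theory Defs
  imports "HOL-Computational_Algebra.Polynomial"
begin

definition qint :: "nat \<Rightarrow> rat poly" where
  "qint j = (\<Sum>i<j. monom 1 i)"

definition qfact :: "nat \<Rightarrow> rat poly" where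
  "qfact n = (\<Prod>j=1..n. qint j)"

definition qbinom :: "int \<Rightarrow> int \<Rightarrow> rat poly" where
  "qbinom n k = (if 0 \<le> k \<and> k \<le> n
     then qfact (nat n) div (qfact (nat k) * qfact (nat (n - k))) else 0)"

end

theory Submission
  imports Defs
begin



definition qx :: "rat poly" where "qx = [:0,1:]"
definition E :: "nat \<Rightarrow> rat poly" where "E n = 1 - qx^n"

lemma monom1: "monom (1::rat) n = qx^n" by (simp add: monom_altdef qx_def)

lemma qint_0: "qint 0 = 0" by (simp add: qint_def)
lemma qint_Suc: "qint (Suc n) = qint n + qx^n"
  by (simp add: qint_def monom1)
lemma qint_add: "qint (m+n) = qint m + qx^m * qint n"
  by (induction n) (simp_all add: qint_0 qint_Suc algebra_simps power_add)
lemma qint_E: "(1 - qx) * qint n = E n"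
proof (induction n)
  case 0 then show ?case by (simp add: qint_0 E_def)
next
  case (Suc n)
  have "(1 - qx) * qint (Suc n) = (1 - qx) * qint n + (1 - qx) * qx^n"
    by (simp add: qint_Suc algebra_simps)
  also have "\<dots> = E (Suc n)" using Suc by (simp add: E_def algebra_simps)
  finally show ?case .
qed
lemma E_nz: "n > 0 \<Longrightarrow> E n \<noteq> 0"
proof
  assume "n > 0" "E n = 0"
  then have "poly (E n) 0 = 0" by simp
  moreover have "poly (E n) 0 = 1" using \<open>n > 0\<close> by (simp add: E_def qx_def)
  ultimately show False by simp
qed
lemma qint_nz: "n>0 \<Longrightarrow> qint n \<noteq> 0" using qint_E E_nz by (metis mult_zero_right)
lemma qfact_0: "qfact 0 = 1" by (simp add: qfact_def)
lemma qfact_Suc: "qfact (Suc n) = qfact n * qint (Suc n)"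
  by (simp add: qfact_def prod.nat_ivl_Suc')
lemma qfact_nz: "qfact n \<noteq> 0"
  by (induction n) (simp_all add: qfact_0 qfact_Suc qint_nz)

fun qb :: "nat \<Rightarrow> nat \<Rightarrow> rat poly" where
  "qb n 0 = 1"
| "qb 0 (Suc k) = 0"
| "qb (Suc n) (Suc k) = qb n k + qx^(Suc k) * qb n (Suc k)"

lemma qb_zero: "n < k \<Longrightarrow> qb n k = 0"
  by (induction n arbitrary: k) (auto elim!: less_natE simp: Suc_less_eq2)

lemma qb_fact: "k \<le> n \<Longrightarrow> qb n k * qfact k * qfact (n-k) = qfact n"
proof (induction n arbitrary: k)
  case 0 then show ?case by (simp add: qfact_0)
next
  case (Suc n)
  show ?case
  proof (cases k)
    case 0 then show ?thesis by (simp add: qfact_0)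
  next
    case (Suc k')
    have k': "k' \<le> n" using Suc.prems Suc by simp
    have t1: "qb n k' * qfact (Suc k') * qfact (n - k') = qfact n * qint (Suc k')"
    proof -
      have "qb n k' * qfact (Suc k') * qfact (n - k') = (qb n k' * qfact k' * qfact (n - k')) * qint (Suc k')"
        by (simp add: qfact_Suc mult_ac)
      then show ?thesis using Suc.IH[OF k'] by simp
    qed
    have t2: "qb n (Suc k') * qfact (Suc k') * qfact (n - k') = qfact n * qint (n - k')"
    proof (cases "k' < n")
      case True
      then have "n - k' = Suc (n - Suc k')" by simp
      then have "qfact (n-k') = qfact (n - Suc k') * qint (n-k')" by (simp add: qfact_Suc)
      then have "qb n (Suc k') * qfact (Suc k') * qfact (n - k') = (qb n (Suc k') * qfact (Suc k') * qfact (n - Suc k')) * qint (n-k')"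
        by (simp add: mult_ac)
      then show ?thesis using Suc.IH[of "Suc k'"] True by simp
    next
      case False then have "k' = n" using k' by simp
      then show ?thesis by (simp add: qb_zero qint_0)
    qed
    have "qb (Suc n) k * qfact k * qfact (Suc n - k) = (qb n k' + qx^(Suc k') * qb n (Suc k')) * qfact (Suc k') * qfact (n-k')"
      using Suc by simp
    also have "\<dots> = qb n k' * qfact (Suc k') * qfact (n-k') + qx^(Suc k') * (qb n (Suc k') * qfact (Suc k') * qfact (n-k'))"
      by (simp add: algebra_simps)
    also have "\<dots> = qfact n * (qint (Suc k') + qx^(Suc k') * qint (n-k'))"
      unfolding t1 t2 by (simp add: algebra_simps)
    also have "qint (Suc k') + qx^(Suc k') * qint (n-k') = qint (Suc n)"
      using qint_add[of "Suc k'" "n-k'"] k' by simp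
    finally show ?thesis by (simp add: qfact_Suc)
  qed
qed

lemma qbinom_qb: "k \<le> n \<Longrightarrow> qbinom (int n) (int k) = qb n k"
proof -
  assume kn: "k \<le> n"
  have nz: "qfact k * qfact (n-k) \<noteq> 0" by (simp add: qfact_nz)
  have "qfact n = qb n k * (qfact k * qfact (n-k))" using qb_fact[OF kn] by (simp add: mult_ac)
  moreover have "nat (int n - int k) = n - k" using kn by simp
  ultimately show ?thesis using kn nz unfolding qbinom_def by simp
qed

lemma qbinom_out: "k < 0 \<or> k > n \<Longrightarrow> qbinom n k = 0"
  unfolding qbinom_def by auto

lemma qb_symm: "k \<le> n \<Longrightarrow> qb n (n-k) = qb n k"
proof -
  assume kn: "k \<le> n"
  have nz: "qfact k * qfact (n-k) \<noteq> 0" by (simp add: qfact_nz)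
  have "qb n (n-k) * (qfact k * qfact (n-k)) = qfact n"
    using qb_fact[of "n-k" n] kn by (simp add: mult_ac)
  also have "\<dots> = qb n k * (qfact k * qfact (n-k))" using qb_fact[OF kn] by (simp add: mult_ac)
  finally show ?thesis using nz by simp
qed

lemma qb_rel1: "qb m (Suc r) * qint (Suc r) = qb m r * qint (m - r)"
proof (cases "r < m")
  case True
  have nz: "qfact r * qfact (m - Suc r) \<noteq> 0" by (simp add: qfact_nz)
  have e: "m - r = Suc (m - Suc r)" using True by simp
  have "(qb m (Suc r) * qint (Suc r)) * (qfact r * qfact (m - Suc r)) = qb m (Suc r) * qfact (Suc r) * qfact (m - Suc r)"
    by (simp add: qfact_Suc mult_ac)
  also have "\<dots> = qfact m" using qb_fact[of "Suc r" m] True by simp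
  also have "\<dots> = qb m r * qfact r * qfact (m - r)" using qb_fact[of r m] True by simp
  also have "\<dots> = (qb m r * qint (m - r)) * (qfact r * qfact (m - Suc r))"
    by (subst e, simp only: qfact_Suc, subst e[symmetric], simp add: mult_ac)
  finally show ?thesis using nz by simp
next
  case False
  then show ?thesis by (simp add: qb_zero qint_0)
qed

lemma qb_rel2: "j \<le> N \<Longrightarrow> qb (Suc N) j * qint (Suc N - j) = qb N j * qint (Suc N)"
proof -
  assume jN: "j \<le> N"
  have nz: "qfact j * qfact (N - j) \<noteq> 0" by (simp add: qfact_nz)
  have e: "Suc N - j = Suc (N - j)" using jN by simp
  have "(qb (Suc N) j * qint (Suc N - j)) * (qfact j * qfact (N - j)) = qb (Suc N) j * qfact j * qfact (Suc N - j)"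
    by (simp only: e qfact_Suc mult_ac)
  also have "\<dots> = qfact (Suc N)" using qb_fact[of j "Suc N"] jN by simp
  also have "\<dots> = (qb N j * qfact j * qfact (N - j)) * qint (Suc N)" using qb_fact[of j N] jN by (simp add: qfact_Suc)
  also have "\<dots> = (qb N j * qint (Suc N)) * (qfact j * qfact (N - j))" by (simp add: mult_ac)
  finally show ?thesis using nz by simp
qed

lemma qb_E1: "qb m (Suc r) * E (Suc r) = qb m r * E (m - r)"
  using arg_cong[OF qb_rel1[of m r], of "\<lambda>t. (1 - qx) * t"] by (simp add: qint_E[symmetric] mult_ac)

lemma qb_E2: "j \<le> N \<Longrightarrow> qb (Suc N) j * E (Suc N - j) = qb N j * E (Suc N)"
  using arg_cong[OF qb_rel2[of j N], of "\<lambda>t. (1 - qx) * t"] by (simp add: qint_E[symmetric] mult_ac)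



declare qb.simps(3)[simp del]
lemma gen:
  fixes x X D J P b0 b1 b2 c0 c1 c2 B1 B2 B3 :: "rat poly"
  assumes hB1: "B1 = b0 + x*X^2*b1" and hB2: "B2 = b1 + x^2*X^2*b2" and hB3: "B3 = B1 + x^2*X^2*B2"
   and r1: "b1*(1 - x*X^2) = b0*(1 - x*D)" and r2: "b2*(1 - x^2*X^2) = b1*(1 - D)"
   and s1: "(1 - x^5*X^4*J^3*D)*c0 = (1 - x^5*X^4*J^2*D)*c1"
   and s2: "(1 - x*J)*c2 = (1 - x^5*X^4*J^2*D)*c1"
  shows "(1 - x^3*X^2*J*D)*(P*J)*(B3 + x^3*X^2*J*D*B1)*c1 - (1 - x^5*X^4*J^3*D)*P*(B2 + x^2*X^2*J*D*b1)*c0 = -(P*(1-J)*B2*c1) + P*J*D*x*(1 - x*J)*b0*c2"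
proof -
  define Psi where "Psi = (1-x^3*X^2*J*D)*J*(B3+x^3*X^2*J*D*B1) - (B2+x^2*X^2*J*D*b1)*(1-x^5*X^4*J^2*D) + (1-J)*B2 - J*D*x*(1-x^5*X^4*J^2*D)*b0"
  have e1: "(1 - x^5*X^4*J^3*D)*P*(B2 + x^2*X^2*J*D*b1)*c0 = P*(B2 + x^2*X^2*J*D*b1)*((1 - x^5*X^4*J^3*D)*c0)"
    by (simp only: mult_ac)
  have e2: "P*J*D*x*(1 - x*J)*b0*c2 = P*J*D*x*b0*((1 - x*J)*c2)"
    by (simp only: mult_ac)
  have e3: "(1 - x^3*X^2*J*D)*(P*J)*(B3 + x^3*X^2*J*D*B1)*c1 - P*(B2 + x^2*X^2*J*D*b1)*((1 - x^5*X^4*J^2*D)*c1)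
     - (-(P*(1-J)*B2*c1) + P*J*D*x*b0*((1 - x^5*X^4*J^2*D)*c1)) = P*c1*Psi"
    unfolding Psi_def by algebra
  have e4: "Psi = J*(b0*(1-x*D)) + J*(-1 + x*X^2 + x^2*X^2 - x^2*X^2*D)*b1 - x^2*X^2*J*(b2*(1-x^2*X^2))"
    unfolding Psi_def hB3 unfolding hB1 hB2 by algebra
  have e5: "Psi = 0"
    unfolding e4 r1[symmetric] r2 by algebra
  show ?thesis
    unfolding e1 e2 s1 s2 using e3 e5 by (simp add: algebra_simps)
qed
lemma core:
  fixes k' d j :: nat
  defines "m \<equiv> 2*k'+1+d" and "N \<equiv> 4*k'+4+3*j+d"
  shows "E (2*k'+3+j+d) * qx^(j*(d+1)) * (qb (m+2) (2*k'+2) + qx^(2*k'+3+j+d) * qb (m+1) (2*k'+1)) * qb (N+1) j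
   - E (N+1) * qx^(j*d) * (qb (m+1) (2*k'+2) + qx^(2*k'+2+j+d) * qb m (2*k'+1)) * qb N j
   = - (qx^(j*d) * E j * qb (m+1) (2*k'+2) * qb (N+1) j) + qx^((j+1)*(d+1)) * E (j+1) * qb m (2*k') * qb (N+1) (j+1)"
proof -
  have p1: "qx^(j*(d+1)) = qx^(j*d)*qx^j"
  proof -
    have "qx^(j*(d+1)) = qx^(j*d + j)" by (rule arg_cong[where f="\<lambda>n. qx^n"]) (simp add: N_def)
    then show ?thesis by (simp only: power_add power_mult power_one_right)
  qed
  have p2: "qx^(2*k'+3+j+d) = qx^3*(qx^k')^2*qx^j*qx^d"
  proof -
    have "qx^(2*k'+3+j+d) = qx^(3 + k'*2 + j + d)" by (rule arg_cong[where f="\<lambda>n. qx^n"]) (simp add: N_def)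
    then show ?thesis by (simp only: power_add power_mult power_one_right)
  qed
  have p3: "qx^(2*k'+2+j+d) = qx^2*(qx^k')^2*qx^j*qx^d"
  proof -
    have "qx^(2*k'+2+j+d) = qx^(2 + k'*2 + j + d)" by (rule arg_cong[where f="\<lambda>n. qx^n"]) (simp add: N_def)
    then show ?thesis by (simp only: power_add power_mult power_one_right)
  qed
  have p4: "qx^((j+1)*(d+1)) = qx^(j*d)*qx^j*qx^d*qx"
  proof -
    have "qx^((j+1)*(d+1)) = qx^(j*d + j + d + 1)" by (rule arg_cong[where f="\<lambda>n. qx^n"]) (simp add: N_def)
    then show ?thesis by (simp only: power_add power_mult power_one_right)
  qed
  have p5: "qx^(N+1) = qx^5*(qx^k')^4*(qx^j)^3*qx^d"
  proof -
    have "qx^(N+1) = qx^(5 + k'*4 + j*3 + d)" by (rule arg_cong[where f="\<lambda>n. qx^n"]) (simp add: N_def)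
    then show ?thesis by (simp only: power_add power_mult power_one_right)
  qed
  have p6: "qx^(j+1) = qx*qx^j" by simp
  have p7: "qx^(N+1-j) = qx^5*(qx^k')^4*(qx^j)^2*qx^d"
  proof -
    have "qx^(N+1-j) = qx^(5 + k'*4 + j*2 + d)" by (rule arg_cong[where f="\<lambda>n. qx^n"]) (simp add: N_def)
    then show ?thesis by (simp only: power_add power_mult power_one_right)
  qed
  have p8: "qx^(2*k'+1) = qx*(qx^k')^2"
  proof -
    have "qx^(2*k'+1) = qx^(1 + k'*2)" by (rule arg_cong[where f="\<lambda>n. qx^n"]) (simp add: N_def)
    then show ?thesis by (simp only: power_add power_mult power_one_right)
  qed
  have p9: "qx^(2*k'+2) = qx^2*(qx^k')^2"
  proof -
    have "qx^(2*k'+2) = qx^(2 + k'*2)" by (rule arg_cong[where f="\<lambda>n. qx^n"]) (simp add: N_def)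
    then show ?thesis by (simp only: power_add power_mult power_one_right)
  qed
  have hB1: "qb (m+1) (2*k'+1) = qb m (2*k') + qx*(qx^k')^2*qb m (2*k'+1)"
    using qb.simps(3)[of m "2*k'"] p8 by simp
  have hB2: "qb (m+1) (2*k'+2) = qb m (2*k'+1) + qx^2*(qx^k')^2*qb m (2*k'+2)"
    using qb.simps(3)[of m "2*k'+1"] p9 by simp
  have hB3: "qb (m+2) (2*k'+2) = qb (m+1) (2*k'+1) + qx^2*(qx^k')^2*qb (m+1) (2*k'+2)"
    using qb.simps(3)[of "m+1" "2*k'+1"] p9 by simp
  have pd: "qx^(d+1) = qx*qx^d" by simp
  have pj: "qx^(j+1) = qx*qx^j" by simp
  have r1: "qb m (2*k'+1) * (1 - qx*(qx^k')^2) = qb m (2*k') * (1 - qx*qx^d)"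
  proof -
    have "qb m (2*k'+1) * E (2*k'+1) = qb m (2*k') * E (d+1)" using qb_E1[of m "2*k'"] by (simp add: m_def)
    then show ?thesis by (simp only: E_def p8 pd)
  qed
  have r2: "qb m (2*k'+2) * (1 - qx^2*(qx^k')^2) = qb m (2*k'+1) * (1 - qx^d)"
  proof -
    have "qb m (2*k'+2) * E (2*k'+2) = qb m (2*k'+1) * E d" using qb_E1[of m "2*k'+1"] by (simp add: m_def)
    then show ?thesis by (simp only: E_def p9)
  qed
  have s1: "(1 - qx^5*(qx^k')^4*(qx^j)^3*qx^d) * qb N j = (1 - qx^5*(qx^k')^4*(qx^j)^2*qx^d) * qb (N+1) j"
  proof -
    have "qb (N+1) j * E (N+1-j) = qb N j * E (N+1)" using qb_E2[of j N] by (simp add: N_def)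
    then show ?thesis by (simp only: E_def p5 p7 mult.commute)
  qed
  have s2: "(1 - qx*qx^j) * qb (N+1) (j+1) = (1 - qx^5*(qx^k')^4*(qx^j)^2*qx^d) * qb (N+1) j"
  proof -
    have "qb (N+1) (j+1) * E (j+1) = qb (N+1) j * E (N+1-j)" using qb_E1[of "N+1" j] by simp
    then show ?thesis by (simp only: E_def p7 pj mult.commute)
  qed
  show ?thesis
    unfolding E_def p1 p2 p3 p4 p5 p6
    by (rule gen[OF hB1 hB2 hB3 r1 r2 s1 s2])
qed



lemma qb_diag: "qb n n = 1"
  using qb_fact[of n n] qfact_nz[of n] by (simp add: qfact_0)

lemma qbinom_nat: "qbinom (int n) (int k) = qb n k"
  by (cases "k \<le> n") (auto simp: qbinom_qb qbinom_out qb_zero)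

definition Fa :: "nat \<Rightarrow> nat \<Rightarrow> nat \<Rightarrow> rat poly" where
 "Fa a i k = qx^((a-k)*(i-k)) * (qb (i+k) (2*k) + qx^(a+i) * (if k = 0 then 0 else qb (i+k-1) (2*k-1))) * qb (3*a+i) (a-k)"

definition Ga :: "nat \<Rightarrow> nat \<Rightarrow> nat \<Rightarrow> rat poly" where
 "Ga a i k = (if k = 0 then 0 else - (qx^((a+1-k)*(i+1-k)) * E (a+1-k) * qb (i+k-1) (2*k-2) * qb (3*a+i+1) (a+1-k)))"

lemma local_0: "E (a+i+1) * Fa a (i+1) 0 - E (3*a+i+1) * Fa a i 0 = Ga a i (Suc 0) - Ga a i 0"
proof -
  have c: "E (3*a+i+1) * qb (3*a+i) a = E (2*a+i+1) * qb (3*a+i+1) a"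
    using qb_E2[of a "3*a+i"] by (simp add: mult.commute)
  have "E (a+i+1) * Fa a (i+1) 0 - E (3*a+i+1) * Fa a i 0
      = qx^(a*i) * (E (a+i+1) * qx^a * qb (3*a+i+1) a - E (3*a+i+1) * qb (3*a+i) a)"
    unfolding Fa_def by (simp add: algebra_simps power_add)
  also have "\<dots> = qx^(a*i) * qb (3*a+i+1) a * (E (a+i+1) * qx^a - E (2*a+i+1))"
    unfolding c by (simp add: algebra_simps)
  also have "E (a+i+1) * qx^a - E (2*a+i+1) = - E a"
  proof -
    have h1: "qx^(2*a+i+1) = qx^a*qx^a*qx^i*qx" by (simp add: mult_2 power_add)
    have h2: "qx^(a+i+1) = qx^a*qx^i*qx" by (simp add: power_add)
    show ?thesis unfolding E_def h1 h2 by (simp add: algebra_simps)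
  qed
  finally show ?thesis unfolding Ga_def by (simp add: algebra_simps)
qed

lemma local_mid:
  assumes "1 \<le> k" "k \<le> i" "k \<le> a"
  shows "E (a+i+1) * Fa a (i+1) k - E (3*a+i+1) * Fa a i k = Ga a i (Suc k) - Ga a i k"
proof -
  obtain k' where k: "k = Suc k'" using assms(1) by (cases k) auto
  obtain d where i: "i = Suc k' + d" using assms(2) k le_Suc_ex by blast
  obtain j where a: "a = Suc k' + j" using assms(3) k le_Suc_ex by blast
  note cr = core[where k'=k' and d=d and j=j]
  have r: "a - k = j" "i+1-k = d+1" "i-k = d" "i+1+k = 2*k'+1+d+2" "2*k = 2*k'+2"
    "a+(i+1) = 2*k'+3+j+d" "(k=0) = False" "2*k'+1+d+2-1 = 2*k'+1+d+1" "2*k'+2-1 = 2*k'+1"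
    "3*a+(i+1) = 4*k'+4+3*j+d+1" "i+k = 2*k'+1+d+1" "a+i = 2*k'+2+j+d" "2*k'+1+d+1-1 = 2*k'+1+d"
    "3*a+i = 4*k'+4+3*j+d" "a+1-Suc k = j" "i+1-Suc k = d" "i+Suc k-1 = 2*k'+1+d+1" "2*Suc k-2 = 2*k'+2"
    "3*a+i+1 = 4*k'+4+3*j+d+1" "a+1-k = j+1" "i+k-1 = 2*k'+1+d" "2*k'+2-2 = 2*k'" "(Suc k = 0) = False"
    "a+i+1 = 2*k'+3+j+d"
    using a i k by auto
  have f1: "Fa a (i+1) k = qx^(j*(d+1)) * (qb (2*k'+1+d+2) (2*k'+2) + qx^(2*k'+3+j+d) * qb (2*k'+1+d+1) (2*k'+1)) * qb (4*k'+4+3*j+d+1) j"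
    unfolding Fa_def by (simp only: r if_False)
  have f2: "Fa a i k = qx^(j*d) * (qb (2*k'+1+d+1) (2*k'+2) + qx^(2*k'+2+j+d) * qb (2*k'+1+d) (2*k'+1)) * qb (4*k'+4+3*j+d) j"
    unfolding Fa_def by (simp only: r if_False)
  have g1: "Ga a i (Suc k) = - (qx^(j*d) * E j * qb (2*k'+1+d+1) (2*k'+2) * qb (4*k'+4+3*j+d+1) j)"
    unfolding Ga_def by (simp only: r if_False)
  have g2: "Ga a i k = - (qx^((j+1)*(d+1)) * E (j+1) * qb (2*k'+1+d) (2*k') * qb (4*k'+4+3*j+d+1) (j+1))"
    unfolding Ga_def by (simp only: r if_False)
  have e1: "E (a+i+1) = E (2*k'+3+j+d)" unfolding a i by (rule arg_cong[where f=E]) simp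
  have e2: "E (3*a+i+1) = E (4*k'+4+3*j+d+1)" unfolding a i by (rule arg_cong[where f=E]) simp
  show ?thesis unfolding f1 f2 g1 g2 e1 e2 using cr by (simp only: mult.assoc)
qed

lemma local_edge:
  assumes k: "k = Suc i" and ka: "k \<le> a"
  shows "E (a+i+1) * Fa a (i+1) k - E (3*a+i+1) * Fa a i k = Ga a i (Suc k) - Ga a i k"
proof -
  obtain j where a: "a = Suc i + j" using k ka le_Suc_ex by blast
  have z1: "qb (i+k) (2*k) = 0" using k by (intro qb_zero) simp
  have z2: "qb (i+k-1) (2*k-1) = 0" using k by (intro qb_zero) simp
  have z3: "qb (i + Suc k - 1) (2 * Suc k - 2) = 0" using k by (intro qb_zero) simp
  have kz: "(k = 0) = False" using k by simp
  have F0: "Fa a i k = 0" unfolding Fa_def kz if_False z1 z2 by simp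
  have G0: "Ga a i (Suc k) = 0" unfolding Ga_def by (simp add: z1 z3)
  have r: "(a-k)*(i+1-k) = 0" "i+1+k = 2*k" "i+1+k-1 = 2*k-1" "a-k = j" "a+1-k = j+1" "(a+1-k)*(i+1-k) = 0"
     "i+k-1 = 2*k-2" "3*a+(i+1) = 3*a+i+1"
    using k a by auto
  have F1: "Fa a (i+1) k = (1 + qx^(a+i+1)) * qb (3*a+i+1) j"
    unfolding Fa_def r using k by (simp add: qb_diag algebra_simps)
  have G1: "Ga a i k = - (E (j+1) * qb (3*a+i+1) (j+1))"
    unfolding Ga_def r using k by (simp add: qb_diag)
  have c: "qb (3*a+i+1) (Suc j) * E (Suc j) = qb (3*a+i+1) j * E (3*a+i+1 - j)"
    by (rule qb_E1)
  have ex: "3*a+i+1 - j = (a+i+1) + (a+i+1)" using a by simp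
  have eq: "E (a+i+1) * (1 + qx^(a+i+1)) = E (3*a+i+1 - j)"
    unfolding ex E_def by (simp add: power_add algebra_simps)
  have "E (a+i+1) * ((1 + qx^(a+i+1)) * qb (3*a+i+1) j) = (E (a+i+1) * (1 + qx^(a+i+1))) * qb (3*a+i+1) j"
    by (simp only: mult.assoc)
  also have "\<dots> = qb (3*a+i+1) j * E (3*a+i+1 - j)" by (simp only: eq mult.commute)
  also have "\<dots> = E (j+1) * qb (3*a+i+1) (j+1)" using c by (simp add: mult.commute)
  finally show ?thesis unfolding F0 G0 F1 G1 by simp
qed

lemma local_far:
  assumes k: "Suc i < k"
  shows "E (a+i+1) * Fa a (i+1) k - E (3*a+i+1) * Fa a i k = Ga a i (Suc k) - Ga a i k"
proof -
  have z: "qb (i+1+k) (2*k) = 0" "qb (i+1+k-1) (2*k-1) = 0" "qb (i+k) (2*k) = 0" "qb (i+k-1) (2*k-1) = 0"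
     "qb (i + Suc k - 1) (2 * Suc k - 2) = 0" "qb (i+k-1) (2*k-2) = 0"
    using k by (auto intro!: qb_zero)
  have kz: "(k = 0) = False" using k by simp
  show ?thesis unfolding Fa_def Ga_def kz if_False z by simp
qed

lemma local_all:
  assumes "k \<le> a"
  shows "E (a+i+1) * Fa a (i+1) k - E (3*a+i+1) * Fa a i k = Ga a i (Suc k) - Ga a i k"
proof -
  consider "k = 0" | "1 \<le> k \<and> k \<le> i" | "k = Suc i" | "Suc i < k" by linarith
  then show ?thesis
  proof cases
    case 1 then show ?thesis using local_0 by simp
  next
    case 2 then show ?thesis using local_mid assms by blast
  next
    case 3 then show ?thesis using local_edge assms by blast
  next
    case 4 then show ?thesis using local_far by blast
  qed
qed

lemma main: "(\<Sum>k\<le>a. Fa a i k) = qb (3*a+i) (2*a)"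
proof (induction i)
  case 0
  have "(\<Sum>k\<le>a. Fa a 0 k) = (\<Sum>k\<le>a. if k = 0 then qb (3*a) a else 0)"
  proof (rule sum.cong)
    fix k assume "k \<in> {..a}"
    show "Fa a 0 k = (if k = 0 then qb (3*a) a else 0)"
    proof (cases "k = 0")
      case True then show ?thesis unfolding Fa_def by simp
    next
      case False
      then have "qb k (2*k) = 0" "qb (k-1) (2*k-1) = 0" by (auto intro!: qb_zero)
      then show ?thesis unfolding Fa_def using False by simp
    qed
  qed simp
  also have "\<dots> = qb (3*a) a" by simp
  also have "\<dots> = qb (3*a) (2*a)" using qb_symm[of a "3*a"] by simp
  finally show ?case by simp
next
  case (Suc i)
  have tel: "(\<Sum>k\<le>a. E (a+i+1) * Fa a (i+1) k - E (3*a+i+1) * Fa a i k) = 0"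
  proof -
    have "(\<Sum>k\<le>a. E (a+i+1) * Fa a (i+1) k - E (3*a+i+1) * Fa a i k) = (\<Sum>k<Suc a. Ga a i (Suc k) - Ga a i k)"
      unfolding lessThan_Suc_atMost by (rule sum.cong[OF refl], rule local_all, simp)
    also have "\<dots> = Ga a i (Suc a) - Ga a i 0" by (rule sum_lessThan_telescope)
    also have "\<dots> = 0" unfolding Ga_def by (simp add: E_def)
    finally show ?thesis .
  qed
  have "E (a+i+1) * (\<Sum>k\<le>a. Fa a (i+1) k) = E (3*a+i+1) * (\<Sum>k\<le>a. Fa a i k)"
    using tel by (simp add: sum_subtractf sum_distrib_left)
  also have "\<dots> = E (3*a+i+1) * qb (3*a+i) (2*a)" using Suc.IH by simp
  also have "\<dots> = E (a+i+1) * qb (3*a+Suc i) (2*a)"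
  proof -
    have "qb (Suc (3*a+i)) (2*a) * E (Suc (3*a+i) - 2*a) = qb (3*a+i) (2*a) * E (Suc (3*a+i))"
      by (rule qb_E2) simp
    moreover have "Suc (3*a+i) - 2*a = a+i+1" by simp
    ultimately show ?thesis by (simp add: mult.commute)
  qed
  finally have "E (a+i+1) * (\<Sum>k\<le>a. Fa a (Suc i) k) = E (a+i+1) * qb (3*a+Suc i) (2*a)" by simp
  moreover have "E (a+i+1) \<noteq> 0" by (rule E_nz) simp
  ultimately show ?case by simp
qed




theorem lemma5:
  fixes a i :: nat
  assumes "a > 0" and "i > 0"
  shows "qbinom (3*a+i) (a+i) =
    (\<Sum>k\<in>{0..a}. monom 1 (nat ((int a - int k) * (int i - int k))) *
       (qbinom (int i + int k) (2 * int k)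
        + monom 1 (a+i) * qbinom (int i + int k - 1) (2 * int k - 1))
       * qbinom (3 * int a + int i) (int a - int k))"
proof -
  have L: "qbinom (3*a+i) (a+i) = qb (3*a+i) (2*a)"
  proof -
    have "qbinom (3*a+i) (a+i) = qb (3*a+i) (a+i)" by (rule qbinom_nat)
    also have "\<dots> = qb (3*a+i) (2*a)" using qb_symm[of "2*a" "3*a+i"] by simp
    finally show ?thesis .
  qed
  have T: "monom 1 (nat ((int a - int k) * (int i - int k))) *
       (qbinom (int i + int k) (2 * int k)
        + monom 1 (a+i) * qbinom (int i + int k - 1) (2 * int k - 1))
       * qbinom (3 * int a + int i) (int a - int k) = Fa a i k" if k: "k \<in> {0..a}" for k
  proof -
    have ka: "k \<le> a" using k by simp
    have t1: "monom 1 (nat ((int a - int k) * (int i - int k))) = qx^((a-k)*(i-k))"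
    proof (cases "k \<le> i")
      case True
      then have "(int a - int k) * (int i - int k) = int ((a-k)*(i-k))" using ka by (simp add: of_nat_diff)
      then have "nat ((int a - int k) * (int i - int k)) = (a-k)*(i-k)" by (simp only: nat_int)
      then show ?thesis by (simp add: monom1)
    next
      case False
      then have "(int a - int k) * (int i - int k) \<le> 0" using ka by (simp add: mult_nonneg_nonpos)
      then have e: "nat ((int a - int k) * (int i - int k)) = 0" by simp
      have f: "(a-k)*(i-k) = 0" using False by simp
      show ?thesis by (simp only: e f monom1)
    qed
    have t2: "qbinom (int i + int k) (2 * int k) = qb (i+k) (2*k)"
      using qbinom_nat[of "i+k" "2*k"] by simp
    have t3: "qbinom (int i + int k - 1) (2 * int k - 1) = (if k = 0 then 0 else qb (i+k-1) (2*k-1))"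
    proof (cases "k = 0")
      case True then show ?thesis by (simp add: qbinom_out)
    next
      case False
      then have "int i + int k - 1 = int (i+k-1)" "2 * int k - 1 = int (2*k-1)" by auto
      then show ?thesis using False qbinom_nat[of "i+k-1" "2*k-1"] by simp
    qed
    have t4: "qbinom (3 * int a + int i) (int a - int k) = qb (3*a+i) (a-k)"
    proof -
      have e: "3 * int a + int i = int (3*a+i)" "int a - int k = int (a-k)" using ka by auto
      show ?thesis unfolding e by (rule qbinom_nat)
    qed
    show ?thesis unfolding t1 t2 t3 t4 unfolding Fa_def monom1 by simp
  qed
  have "(\<Sum>k\<in>{0..a}. monom 1 (nat ((int a - int k) * (int i - int k))) *
       (qbinom (int i + int k) (2 * int k)
        + monom 1 (a+i) * qbinom (int i + int k - 1) (2 * int k - 1))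
       * qbinom (3 * int a + int i) (int a - int k)) = (\<Sum>k\<in>{0..a}. Fa a i k)"
    by (rule sum.cong[OF refl]) (rule T)
  also have "\<dots> = qb (3*a+i) (2*a)" using main[of a i] by (simp add: atLeast0AtMost)
  finally show ?thesis using L by simp
qed


end
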